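(* Let $N$ be finite, $\mathbf P$ stochastic on $N$, $0<\beta<1$, $\mathbf R\in\mathbb R^N$ and $S\subseteq N$. For every $i\in N$ and every $j\in S^c$, $$\nu_i^{S\cup\{j\}}=\nu_j^S-\frac{w_i^S}{w_i^{S\cup\{j\}}}\big(\nu_j^S-\nu_i^S\big).$$
   Context: $N$ is a finite state set, $\mathbf{P}=(p_{ij})$ stochastic, $\beta\in(0,1)$, $\mathbf R=(R_j)$; $X(t)$ the Markov chain with matrix $\mathbf P$, $\mathsf E_i$ expectation given $X(0)=i$, $S^c=N\setminus S$. For $S\subseteq N$, $\tau_S=\min\{t\ge0:X(t)\notin S\}$, $f_i^S=\mathsf{E}_i[\sum_{t=0}^{\tau_S-1}R_{X(t)}\beta^t]$, $g_i^S=\mathsf{E}_i[\sum_{t=0}^{\tau_S-1}\beta^t]$, $w_i^S=1+\beta\sum_jp_{ij}g_j^S-\beta g_i^S$ (positive), $r_i^S=R_i+\beta\sum_jp_{ij}f_j^S-\beta f_i^S$, $\nu_i^S=r_i^S/w_i^S$. *)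

theory Defs
  imports "HOL-Analysis.Analysis"
begin

text \<open>State space N is the finite type 'a (N = UNIV). A transition matrix P is
stochastic if its entries are nonnegative and its rows sum to 1.\<close>

definition stochastic :: "('a::finite \<Rightarrow> 'a \<Rightarrow> real) \<Rightarrow> bool" where
  "stochastic P \<longleftrightarrow> (\<forall>i j. 0 \<le> P i j) \<and> (\<forall>i. (\<Sum>j\<in>UNIV. P i j) = 1)"

text \<open>stay_prob P S t i k = P_i(X(0),...,X(t) all in S and X(t) = k)
   = P_i(tau_S > t, X(t) = k).\<close>

fun stay_prob :: "('a::finite \<Rightarrow> 'a \<Rightarrow> real) \<Rightarrow> 'a set \<Rightarrow> nat \<Rightarrow> 'a \<Rightarrow> 'a \<Rightarrow> real" where
  "stay_prob P S 0 i k = (if i \<in> S \<and> k = i then 1 else 0)"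
| "stay_prob P S (Suc t) i k =
     (if k \<in> S then (\<Sum>l\<in>UNIV. stay_prob P S t i l * P l k) else 0)"

text \<open>f_i^S = E_i[sum_{t<tau_S} R(X t) beta^t] = sum_t beta^t E_i[R(X t); tau_S > t].\<close>

definition fS :: "('a::finite \<Rightarrow> 'a \<Rightarrow> real) \<Rightarrow> real \<Rightarrow> ('a \<Rightarrow> real) \<Rightarrow> 'a set \<Rightarrow> 'a \<Rightarrow> real" where
  "fS P \<beta> R S i = (\<Sum>t. \<beta> ^ t * (\<Sum>k\<in>UNIV. stay_prob P S t i k * R k))"

definition gS :: "('a::finite \<Rightarrow> 'a \<Rightarrow> real) \<Rightarrow> real \<Rightarrow> 'a set \<Rightarrow> 'a \<Rightarrow> real" where
  "gS P \<beta> S i = fS P \<beta> (\<lambda>_. 1) S i"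

definition wS :: "('a::finite \<Rightarrow> 'a \<Rightarrow> real) \<Rightarrow> real \<Rightarrow> 'a set \<Rightarrow> 'a \<Rightarrow> real" where
  "wS P \<beta> S i = 1 + \<beta> * (\<Sum>j\<in>UNIV. P i j * gS P \<beta> S j) - \<beta> * gS P \<beta> S i"

definition rS :: "('a::finite \<Rightarrow> 'a \<Rightarrow> real) \<Rightarrow> real \<Rightarrow> ('a \<Rightarrow> real) \<Rightarrow> 'a set \<Rightarrow> 'a \<Rightarrow> real" where
  "rS P \<beta> R S i = R i + \<beta> * (\<Sum>j\<in>UNIV. P i j * fS P \<beta> R S j) - \<beta> * fS P \<beta> R S i"

definition nuS :: "('a::finite \<Rightarrow> 'a \<Rightarrow> real) \<Rightarrow> real \<Rightarrow> ('a \<Rightarrow> real) \<Rightarrow> 'a set \<Rightarrow> 'a \<Rightarrow> real" where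
  "nuS P \<beta> R S i = rS P \<beta> R S i / wS P \<beta> S i"

end

theory Submission
  imports Defs
begin

lemma stay_nonneg: "stochastic P \<Longrightarrow> 0 \<le> stay_prob P S t i k"
  by (induction t arbitrary: k) (auto simp: stochastic_def intro!: sum_nonneg mult_nonneg_nonneg)

lemma stay_sum_le: assumes "stochastic P" shows "(\<Sum>k\<in>UNIV. stay_prob P S t i k) \<le> 1"
proof (induction t)
  case 0
  have "(\<Sum>k\<in>UNIV. stay_prob P S 0 i k) = (if i \<in> S then 1 else 0)"
    by (simp add: sum.delta)
  then show ?case by simp
next
  case (Suc t)
  have "(\<Sum>k\<in>UNIV. stay_prob P S (Suc t) i k) \<le> (\<Sum>k\<in>UNIV. \<Sum>l\<in>UNIV. stay_prob P S t i l * P l k)"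
    by (rule sum_mono) (auto intro!: sum_nonneg mult_nonneg_nonneg stay_nonneg assms
          simp: assms[unfolded stochastic_def])
  also have "\<dots> = (\<Sum>l\<in>UNIV. stay_prob P S t i l * (\<Sum>k\<in>UNIV. P l k))"
    by (subst sum.swap) (simp add: sum_distrib_left)
  also have "\<dots> = (\<Sum>l\<in>UNIV. stay_prob P S t i l)"
    using assms by (simp add: stochastic_def)
  finally show ?case using Suc by simp
qed

lemma stay_le1: assumes "stochastic P" shows "stay_prob P S t i k \<le> 1"
proof -
  have "stay_prob P S t i k \<le> (\<Sum>k\<in>UNIV. stay_prob P S t i k)"
    by (rule member_le_sum) (auto intro: stay_nonneg assms)
  then show ?thesis using stay_sum_le[OF assms, of S t i] by linarith
qed

lemma stay_first:
  "stay_prob P S (Suc t) i k = (if i \<in> S then (\<Sum>l\<in>UNIV. P i l * stay_prob P S t l k) else 0)"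
proof (induction t arbitrary: k)
  case 0
  have e1: "(\<lambda>l. stay_prob P S 0 i l * P l k) = (\<lambda>l. if l = i then (if i \<in> S then P i k else 0) else 0)"
    by auto
  have e2: "(\<lambda>l. P i l * stay_prob P S 0 l k) = (\<lambda>l. if l = k then (if k \<in> S then P i k else 0) else 0)"
    by auto
  show ?case unfolding stay_prob.simps(2) e1 e2 by simp
next
  case (Suc t)
  have "stay_prob P S (Suc (Suc t)) i k =
     (if k \<in> S then \<Sum>l\<in>UNIV. stay_prob P S (Suc t) i l * P l k else 0)" by simp
  also have "\<dots> = (if k \<in> S then \<Sum>l\<in>UNIV. (if i \<in> S then (\<Sum>m\<in>UNIV. P i m * stay_prob P S t m l) else 0) * P l k else 0)"
    using Suc by simp
  also have "\<dots> = (if i \<in> S then (\<Sum>m\<in>UNIV. P i m * stay_prob P S (Suc t) m k) else 0)"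
    by (auto simp: sum_distrib_left sum_distrib_right mult.assoc intro: sum.swap)
  finally show ?case .
qed

lemma summ:
  assumes "stochastic P" "\<bar>\<beta>\<bar> < 1"
  shows "summable (\<lambda>t. \<beta> ^ t * (\<Sum>k\<in>UNIV. stay_prob P S t i k * R k))"
proof (rule summable_comparison_test)
  show "summable (\<lambda>t. (\<Sum>k\<in>UNIV. \<bar>R k\<bar>) * \<bar>\<beta>\<bar> ^ t)"
    using assms by (intro summable_mult summable_geometric) simp
  show "\<exists>N. \<forall>n\<ge>N. norm (\<beta> ^ n * (\<Sum>k\<in>UNIV. stay_prob P S n i k * R k)) \<le> (\<Sum>k\<in>UNIV. \<bar>R k\<bar>) * \<bar>\<beta>\<bar> ^ n"
  proof (intro exI allI impI)
    fix n
    have "\<bar>\<Sum>k\<in>UNIV. stay_prob P S n i k * R k\<bar> \<le> (\<Sum>k\<in>UNIV. \<bar>stay_prob P S n i k * R k\<bar>)"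
      by (rule sum_abs)
    also have "\<dots> \<le> (\<Sum>k\<in>UNIV. \<bar>R k\<bar>)"
    proof (rule sum_mono)
      fix k
      have "\<bar>stay_prob P S n i k\<bar> \<le> 1" using stay_nonneg[OF assms(1)] stay_le1[OF assms(1)]
        by (simp add: abs_le_iff)
      then show "\<bar>stay_prob P S n i k * R k\<bar> \<le> \<bar>R k\<bar>"
        by (simp add: abs_mult mult_left_le_one_le)
    qed
    finally show "norm (\<beta> ^ n * (\<Sum>k\<in>UNIV. stay_prob P S n i k * R k)) \<le> (\<Sum>k\<in>UNIV. \<bar>R k\<bar>) * \<bar>\<beta>\<bar> ^ n"
      by (simp add: abs_mult power_abs mult.commute mult_left_mono)
  qed
qed

lemma fS_eq:
  assumes "stochastic P" "\<bar>\<beta>\<bar> < 1"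
  shows "fS P \<beta> R S i = (if i \<in> S then R i + \<beta> * (\<Sum>l\<in>UNIV. P i l * fS P \<beta> R S l) else 0)"
proof -
  define a where "a t l = (\<Sum>k\<in>UNIV. stay_prob P S t l k * R k)" for t l
  have sm: "summable (\<lambda>t. \<beta> ^ t * a t l)" for l
    unfolding a_def by (rule summ[OF assms])
  have aS: "a (Suc t) i = (if i \<in> S then (\<Sum>l\<in>UNIV. P i l * a t l) else 0)" for t
  proof -
    have "a (Suc t) i = (if i \<in> S then (\<Sum>k\<in>UNIV. (\<Sum>l\<in>UNIV. P i l * stay_prob P S t l k) * R k) else 0)"
      unfolding a_def by (cases "i \<in> S") (simp_all del: stay_prob.simps(2) add: stay_first)
    also have "\<dots> = (if i \<in> S then (\<Sum>l\<in>UNIV. P i l * a t l) else 0)"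
      unfolding a_def by (simp add: sum_distrib_left sum_distrib_right mult.assoc) (rule impI, rule sum.swap)
    finally show ?thesis .
  qed
  have a0: "a 0 i = (if i \<in> S then R i else 0)"
  proof -
    have "(\<lambda>k. stay_prob P S 0 i k * R k) = (\<lambda>k. if k = i then (if i \<in> S then R i else 0) else 0)"
      by auto
    then show ?thesis unfolding a_def by (simp only:) simp
  qed
  have f: "fS P \<beta> R S l = (\<Sum>t. \<beta> ^ t * a t l)" for l
    unfolding fS_def a_def ..
  have "(\<Sum>t. \<beta> ^ Suc t * a (Suc t) i) = fS P \<beta> R S i - a 0 i"
    unfolding f by (subst suminf_split_head[OF sm]) simp
  moreover have "(\<Sum>t. \<beta> ^ Suc t * a (Suc t) i) =
     (if i \<in> S then \<beta> * (\<Sum>l\<in>UNIV. P i l * fS P \<beta> R S l) else 0)"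
  proof (cases "i \<in> S")
    case True
    have "(\<Sum>t. \<beta> ^ Suc t * a (Suc t) i) = (\<Sum>t. \<Sum>l\<in>UNIV. \<beta> * P i l * (\<beta> ^ t * a t l))"
      using True by (simp add: aS sum_distrib_left mult_ac)
    also have "\<dots> = (\<Sum>l\<in>UNIV. \<Sum>t. \<beta> * P i l * (\<beta> ^ t * a t l))"
      by (rule suminf_sum) (intro summable_mult sm)
    also have "\<dots> = (\<Sum>l\<in>UNIV. \<beta> * P i l * fS P \<beta> R S l)"
      unfolding f by (intro sum.cong refl suminf_mult[OF sm])
    finally show ?thesis using True by (simp add: sum_distrib_left mult_ac)
  next
    case False
    then show ?thesis by (simp add: aS)
  qed
  ultimately show ?thesis using a0 by (auto split: if_splits)
qed

lemma uniq:
  assumes "stochastic P" "0 \<le> \<beta>" "\<beta> < 1"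
    and X: "\<And>k. X k = (if k \<in> T then \<beta> * (\<Sum>l\<in>UNIV. P k l * X l) else 0)"
  shows "X k = 0"
proof -
  define m where "m = Max (range (\<lambda>k. \<bar>X k\<bar>))"
  have le: "\<bar>X l\<bar> \<le> m" for l unfolding m_def by (rule Max_ge) auto
  have "m \<in> range (\<lambda>k. \<bar>X k\<bar>)" unfolding m_def by (rule Max_in) auto
  then obtain k0 where k0: "\<bar>X k0\<bar> = m" by auto
  have m0: "0 \<le> m" using le[of k] by linarith
  have "\<bar>X k0\<bar> \<le> \<beta> * m"
  proof (cases "k0 \<in> T")
    case True
    have "\<bar>X k0\<bar> = \<beta> * \<bar>\<Sum>l\<in>UNIV. P k0 l * X l\<bar>"
      using True X[of k0] assms(2) by (simp add: abs_mult)
    also have "\<dots> \<le> \<beta> * (\<Sum>l\<in>UNIV. P k0 l * m)"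
    proof (rule mult_left_mono[OF _ assms(2)])
      have "\<bar>\<Sum>l\<in>UNIV. P k0 l * X l\<bar> \<le> (\<Sum>l\<in>UNIV. \<bar>P k0 l * X l\<bar>)" by (rule sum_abs)
      also have "\<dots> \<le> (\<Sum>l\<in>UNIV. P k0 l * m)"
        using assms(1) le by (intro sum_mono) (auto simp: stochastic_def abs_mult intro: mult_left_mono)
      finally show "\<bar>\<Sum>l\<in>UNIV. P k0 l * X l\<bar> \<le> (\<Sum>l\<in>UNIV. P k0 l * m)" .
    qed
    also have "\<dots> = \<beta> * m" using assms(1) by (simp add: stochastic_def sum_distrib_right[symmetric])
    finally show ?thesis .
  next
    case False
    then show ?thesis using X[of k0] m0 assms(2) by simp
  qed
  then have "m \<le> \<beta> * m" using k0 by simp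
  then have "m = 0" using m0 assms(3)
    by (metis mult_less_cancel_right2 not_le order_antisym)
  then show ?thesis using le[of k] by simp
qed

lemma gS_nonneg:
  assumes "stochastic P" "0 \<le> \<beta>" "\<beta> < 1"
  shows "0 \<le> gS P \<beta> T k"
  unfolding gS_def fS_def
  using assms
  by (intro suminf_nonneg summ) (auto intro!: mult_nonneg_nonneg sum_nonneg stay_nonneg)

lemma wS_pos:
  assumes "stochastic P" "0 < \<beta>" "\<beta> < 1"
  shows "0 < wS P \<beta> T k"
proof -
  let ?G = "gS P \<beta> T"
  have ab: "\<bar>\<beta>\<bar> < 1" using assms by simp
  have geq: "?G k = (if k \<in> T then 1 + \<beta> * (\<Sum>l\<in>UNIV. P k l * ?G l) else 0)"
    unfolding gS_def by (rule fS_eq[OF assms(1) ab])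
  have nn: "0 \<le> (\<Sum>l\<in>UNIV. P k l * ?G l)"
    using assms gS_nonneg[OF assms(1), of \<beta> T]
    by (intro sum_nonneg) (auto simp: stochastic_def)
  have b0: "0 \<le> \<beta> * (\<Sum>l\<in>UNIV. P k l * ?G l)" using nn assms by simp
  show ?thesis
  proof (cases "k \<in> T")
    case True
    then have "wS P \<beta> T k = (1 - \<beta>) * (1 + \<beta> * (\<Sum>l\<in>UNIV. P k l * ?G l))"
      unfolding wS_def using geq by (simp add: algebra_simps)
    then show ?thesis using b0 assms by simp
  next
    case False
    then show ?thesis unfolding wS_def using geq b0 by simp
  qed
qed

theorem proposition5:
  fixes P :: "'a::finite \<Rightarrow> 'a \<Rightarrow> real" and \<beta> :: real and R :: "'a \<Rightarrow> real"
    and S :: "'a set" and i j :: 'a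
  assumes "stochastic P" and "0 < \<beta>" and "\<beta> < 1" and "j \<notin> S"
  shows "nuS P \<beta> R (S \<union> {j}) i =
           nuS P \<beta> R S j - wS P \<beta> S i / wS P \<beta> (S \<union> {j}) i * (nuS P \<beta> R S j - nuS P \<beta> R S i)"
proof -
  note st = assms(1)
  have ab: "\<bar>\<beta>\<bar> < 1" using assms by simp
  define S' where "S' = S \<union> {j}"
  define F' where "F' = fS P \<beta> R S'"
  define F where "F = fS P \<beta> R S"
  define G' where "G' = gS P \<beta> S'"
  define G where "G = gS P \<beta> S"
  define c where "c = nuS P \<beta> R S j"
  define X where "X k = (F' k - F k) - c * (G' k - G k)" for k
  have F'e: "F' k = (if k \<in> S' then R k + \<beta> * (\<Sum>l\<in>UNIV. P k l * F' l) else 0)" for k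
    unfolding F'_def by (rule fS_eq[OF st ab])
  have Fe: "F k = (if k \<in> S then R k + \<beta> * (\<Sum>l\<in>UNIV. P k l * F l) else 0)" for k
    unfolding F_def by (rule fS_eq[OF st ab])
  have G'e: "G' k = (if k \<in> S' then 1 + \<beta> * (\<Sum>l\<in>UNIV. P k l * G' l) else 0)" for k
    unfolding G'_def gS_def by (rule fS_eq[OF st ab])
  have Ge: "G k = (if k \<in> S then 1 + \<beta> * (\<Sum>l\<in>UNIV. P k l * G l) else 0)" for k
    unfolding G_def gS_def by (rule fS_eq[OF st ab])
  have wj: "0 < wS P \<beta> S j" by (rule wS_pos[OF assms(1-3)])
  have wi: "0 < wS P \<beta> S i" by (rule wS_pos[OF assms(1-3)])
  have wi': "0 < wS P \<beta> S' i" by (rule wS_pos[OF assms(1-3)])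
  have cw: "c * wS P \<beta> S j = rS P \<beta> R S j"
    unfolding c_def nuS_def using wj by simp
  have rj: "rS P \<beta> R S j = R j + \<beta> * (\<Sum>l\<in>UNIV. P j l * F l)"
    unfolding rS_def F_def using Fe[of j] assms(4) F_def by simp
  have wjx: "wS P \<beta> S j = 1 + \<beta> * (\<Sum>l\<in>UNIV. P j l * G l)"
    unfolding wS_def G_def using Ge[of j] assms(4) G_def by simp
  have sumX: "(\<Sum>l\<in>UNIV. P k l * X l) = (\<Sum>l\<in>UNIV. P k l * F' l) - (\<Sum>l\<in>UNIV. P k l * F l)
      - c * ((\<Sum>l\<in>UNIV. P k l * G' l) - (\<Sum>l\<in>UNIV. P k l * G l))" for k
    unfolding X_def by (simp add: right_diff_distrib sum_subtractf sum_distrib_left mult_ac)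
  have Xe: "X k = (if k \<in> S' then \<beta> * (\<Sum>l\<in>UNIV. P k l * X l) else 0)" for k
  proof (cases "k \<in> S")
    case True
    then have "k \<in> S'" unfolding S'_def by simp
    then show ?thesis unfolding sumX using X_def[of k] True F'e[of k] Fe[of k] G'e[of k] Ge[of k]
      by (simp add: algebra_simps)
  next
    case False
    show ?thesis
    proof (cases "k = j")
      case True
      have "X k = (R j + \<beta> * (\<Sum>l\<in>UNIV. P j l * F' l)) - c * (1 + \<beta> * (\<Sum>l\<in>UNIV. P j l * G' l))"
        unfolding X_def using True F'e[of j] Fe[of j] G'e[of j] Ge[of j] assms(4) S'_def by simp
      also have "\<dots> = \<beta> * (\<Sum>l\<in>UNIV. P k l * X l) + (rS P \<beta> R S j - c * wS P \<beta> S j)"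
        unfolding sumX rj wjx True by (simp add: algebra_simps)
      also have "\<dots> = \<beta> * (\<Sum>l\<in>UNIV. P k l * X l)" using cw by simp
      finally show ?thesis using True S'_def by simp
    next
      case False
      then have "k \<notin> S'" using \<open>k \<notin> S\<close> S'_def by simp
      then show ?thesis unfolding X_def using \<open>k \<notin> S\<close> F'e[of k] Fe[of k] G'e[of k] Ge[of k] by simp
    qed
  qed
  have X0: "X k = 0" for k
    by (rule uniq[OF st _ assms(3) Xe]) (use assms in simp)
  have D: "F' k - F k = c * (G' k - G k)" for k using X0[of k] unfolding X_def by simp
  have sD: "(\<Sum>l\<in>UNIV. P i l * F' l) - (\<Sum>l\<in>UNIV. P i l * F l) =
      c * ((\<Sum>l\<in>UNIV. P i l * G' l) - (\<Sum>l\<in>UNIV. P i l * G l))"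
    using sumX[of i] X0 by simp
  have key: "rS P \<beta> R S' i - rS P \<beta> R S i = c * (wS P \<beta> S' i - wS P \<beta> S i)"
    unfolding rS_def wS_def F'_def[symmetric] F_def[symmetric] G'_def[symmetric] G_def[symmetric]
      gS_def[symmetric]
    using arg_cong[OF D[of i], of "\<lambda>x. \<beta> * x"] arg_cong[OF sD, of "\<lambda>x. \<beta> * x"]
    by (simp add: algebra_simps)
  have "nuS P \<beta> R S' i = c - wS P \<beta> S i / wS P \<beta> S' i * (c - nuS P \<beta> R S i)"
  proof -
    have "rS P \<beta> R S' i / wS P \<beta> S' i = c - wS P \<beta> S i / wS P \<beta> S' i * (c - rS P \<beta> R S i / wS P \<beta> S i)"
      using wi wi' arg_cong[OF key, of "\<lambda>x. wS P \<beta> S i * x"] by (simp add: field_simps)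
    then show ?thesis unfolding nuS_def .
  qed
  then show ?thesis unfolding S'_def c_def .
qed

end
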